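(* Let Assumptions (A1) and (A3) below hold. If $\Pi^\star_\mathbb{X}$ can be reached from $x\in\mathbb{X}$ within $M$ steps, i.e. there exist $\bar u\in\mathbb{U}^M(x)$ and $l\in\{0,\dots,p^\star-1\}$ with $x_{\bar u}(M,x)=\Pi^\star_\mathbb{X}(l)$, then for all $N\in\mathbb{N}$ $$V_N^\beta(x)-\tfrac{N+1}{2}\ell^\star+\lambda(x)+\bar\lambda\le C(M),\qquad C(M)=M(\ell_{\max}-\ell^\star)+2\bar\lambda+\ell^\star p^\star .$$
   Context: System $x(k+1)=f(x(k),u(k))$ with constraint sets $\mathbb{X}\subset\mathbb{R}^n$, $\mathbb{U}\subset\mathbb{R}^m$ and stage cost $\ell:\mathbb{X}\times\mathbb{U}\to\mathbb{R}$, which is assumed non-negative. For $u\in\mathbb{U}^T$, $x_u(0,x)=x$, $x_u(k+1,x)=f(x_u(k,x),u(k))$; $\mathbb{U}^T(x)$ is the set of $u\in\mathbb{U}^T$ with $x_u(k,x)\in\mathbb{X}$ for $k=0,\dots,T$. $[k]_p$ is $k$ mod $p$. A feasible $p$-periodic orbit is $\Pi\in(\mathbb{X}\times\mathbb{U})^p$ with $\Pi_\mathbb{X}([k+1]_p)=f(\Pi(k))$; $\|(x,u)\|_\Pi:=\min_k\|(x,u)-\Pi(k)\|$; $\ell^\star:=\inf$ over all feasible periodic orbits of $\frac1p\sum_{k=0}^{p-1}\ell(\Pi(k))$; $\Pi^\star$ is a fixed feasible $p^\star$-periodic orbit attaining $\ell^\star$. $\ell_{\max}:=\sup_{\mathbb{X}\times\mathbb{U}}\ell$.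 (A1) $f,\ell$ continuous, $\mathbb{X},\mathbb{U}$ compact. (A3) There are $\lambda:\mathbb{X}\to\mathbb{R}$, $\bar\lambda$ with $|\lambda|\le\bar\lambda$ on $\mathbb{X}$, and $\underline\alpha_{\tilde\ell}\in\mathcal K_\infty$ with $\ell(x,u)-\ell^\star+\lambda(x)-\lambda(f(x,u))\ge\underline\alpha_{\tilde\ell}(\|(x,u)\|_{\Pi^\star})$ for all $x\in\mathbb{X}$, $u\in\mathbb{U}^1(x)$. $\beta_N(k)=\frac{N-k}{N}$, $J_N^\beta(x,u)=\sum_{k=0}^{N-1}\beta_N(k)\ell(x_u(k,x),u(k))$, $V_N^\beta(x)=\inf_{u\in\mathbb{U}^N(x)}J_N^\beta(x,u)$. *)

theory Defs
  imports "HOL-Analysis.Analysis"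
begin

fun traj :: "('x \<Rightarrow> 'u \<Rightarrow> 'x) \<Rightarrow> (nat \<Rightarrow> 'u) \<Rightarrow> nat \<Rightarrow> 'x \<Rightarrow> 'x" where
  "traj f u 0 x = x"
| "traj f u (Suc k) x = f (traj f u k x) (u k)"

text \<open>Admissible input sequences U^T(x) (only the first T entries matter).\<close>
definition adm :: "('x \<Rightarrow> 'u \<Rightarrow> 'x) \<Rightarrow> 'x set \<Rightarrow> 'u set \<Rightarrow> nat \<Rightarrow> 'x \<Rightarrow> (nat \<Rightarrow> 'u) set" where
  "adm f X U T x = {u. (\<forall>k<T. u k \<in> U) \<and> (\<forall>k\<le>T. traj f u k x \<in> X)}"

definition feasible_orbit ::
  "('x \<Rightarrow> 'u \<Rightarrow> 'x) \<Rightarrow> 'x set \<Rightarrow> 'u set \<Rightarrow> nat \<Rightarrow> (nat \<Rightarrow> 'x \<times> 'u) \<Rightarrow> bool" where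
  "feasible_orbit f X U p P \<longleftrightarrow> p \<ge> 1 \<and> (\<forall>k<p. P k \<in> X \<times> U) \<and>
     (\<forall>k<p. fst (P ((k + 1) mod p)) = f (fst (P k)) (snd (P k)))"

definition avg_cost :: "('x \<Rightarrow> 'u \<Rightarrow> real) \<Rightarrow> nat \<Rightarrow> (nat \<Rightarrow> 'x \<times> 'u) \<Rightarrow> real" where
  "avg_cost ell p P = (1 / real p) * (\<Sum>k<p. ell (fst (P k)) (snd (P k)))"

definition ell_star ::
  "('x \<Rightarrow> 'u \<Rightarrow> 'x) \<Rightarrow> 'x set \<Rightarrow> 'u set \<Rightarrow> ('x \<Rightarrow> 'u \<Rightarrow> real) \<Rightarrow> real" where
  "ell_star f X U ell = Inf {avg_cost ell p P | p P. feasible_orbit f X U p P}"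

definition orbit_dist :: "nat \<Rightarrow> (nat \<Rightarrow> 'x::real_normed_vector \<times> 'u::real_normed_vector) \<Rightarrow> 'x \<Rightarrow> 'u \<Rightarrow> real"
  where "orbit_dist p P x u = Min ((\<lambda>k. norm ((x, u) - P k)) ` {..<p})"

definition ell_max :: "'x set \<Rightarrow> 'u set \<Rightarrow> ('x \<Rightarrow> 'u \<Rightarrow> real) \<Rightarrow> real" where
  "ell_max X U ell = (SUP z\<in>X \<times> U. ell (fst z) (snd z))"

definition class_Kinf :: "(real \<Rightarrow> real) \<Rightarrow> bool" where
  "class_Kinf \<alpha> \<longleftrightarrow> \<alpha> 0 = 0 \<and> continuous_on {0..} \<alpha> \<and> strict_mono_on {0..} \<alpha> \<and>
     filterlim \<alpha> at_top at_top"

definition J_beta :: "('x \<Rightarrow> 'u \<Rightarrow> 'x) \<Rightarrow> ('x \<Rightarrow> 'u \<Rightarrow> real) \<Rightarrow> nat \<Rightarrow> 'x \<Rightarrow> (nat \<Rightarrow> 'u) \<Rightarrow> real" where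
  "J_beta f ell N x u = (\<Sum>k<N. ((real N - real k) / real N) * ell (traj f u k x) (u k))"

definition V_beta :: "('x \<Rightarrow> 'u \<Rightarrow> 'x) \<Rightarrow> 'x set \<Rightarrow> 'u set \<Rightarrow> ('x \<Rightarrow> 'u \<Rightarrow> real) \<Rightarrow> nat \<Rightarrow> 'x \<Rightarrow> real" where
  "V_beta f X U ell N x = (INF u\<in>adm f X U N x. J_beta f ell N x u)"

end

theory Submission imports Defs begin

lemma block_sum:
  fixes c :: "nat \<Rightarrow> real"
  shows "(\<Sum>j<p. c ((a + j) mod p)) = (\<Sum>k<p. c k)"
proof (induction a)
  case 0
  then show ?case by (intro sum.cong) auto
next
  case (Suc a)
  define h where "h j = c ((a + j) mod p)" for j
  have "(\<Sum>j<p. c ((Suc a + j) mod p)) = (\<Sum>j<p. h (Suc j))"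
    by (simp add: h_def)
  also have "\<dots> = (\<Sum>j<Suc p. h j) - h 0"
    by (simp only: sum.lessThan_Suc_shift)
  also have "\<dots> = (\<Sum>j<p. h j) + h p - h 0" by simp
  also have "h p = h 0" by (simp add: h_def)
  finally show ?case using Suc by (simp add: h_def)
qed

lemma split_sum:
  fixes g :: "nat \<Rightarrow> real"
  shows "(\<Sum>k<m + n. g k) = (\<Sum>k<m. g k) + (\<Sum>j<n. g (m + j))"
  by (induction n) auto

lemma partial_bound:
  fixes c :: "nat \<Rightarrow> real"
  assumes p: "p \<ge> 1" and s0: "(\<Sum>k<p. c k) = 0" and lb: "\<And>k. k < p \<Longrightarrow> c k \<ge> -L"
    and L: "L \<ge> 0"
  shows "(\<Sum>j<m. c ((l + j) mod p)) \<le> real p * L"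
proof (induction m rule: less_induct)
  case (less m)
  have full: "(\<Sum>j<p. c ((a + j) mod p)) = 0" for a
    using block_sum[of c a p] s0 by simp
  show ?case
  proof (cases "m \<ge> p")
    case True
    then obtain r where m: "m = p + r" by (metis le_add_diff_inverse)
    have "(\<Sum>j<m. c ((l + j) mod p)) = (\<Sum>j<p. c ((l + j) mod p)) + (\<Sum>j<r. c ((l + (p + j)) mod p))"
      unfolding m by (rule split_sum)
    also have "\<dots> = (\<Sum>j<r. c ((l + j) mod p))"
      using full[of l] by (simp add: add.left_commute[of l p])
    also have "\<dots> \<le> real p * L" using less[of r] m p by simp
    finally show ?thesis .
  next
    case False
    then obtain r where m: "p = m + r" by (metis le_add_diff_inverse nat_le_linear)
    have "0 = (\<Sum>j<p. c ((l + j) mod p))" using full[of l] by simp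
    also have "\<dots> = (\<Sum>j<m. c ((l + j) mod p)) + (\<Sum>j<r. c ((l + (m + j)) mod p))"
      unfolding m by (rule split_sum)
    finally have eq: "(\<Sum>j<m. c ((l + j) mod p)) = - (\<Sum>j<r. c ((l + (m + j)) mod p))" by linarith
    have "(\<Sum>j<r. c ((l + (m + j)) mod p)) \<ge> (\<Sum>j<r. - L)"
      apply (rule sum_mono) using lb p by simp
    hence "(\<Sum>j<m. c ((l + j) mod p)) \<le> real r * L" using eq by simp
    also have "\<dots> \<le> real p * L" using m L by (simp add: mult_right_mono)
    finally show ?thesis .
  qed
qed

lemma weighted_bound:
  fixes c :: "nat \<Rightarrow> real"
  assumes p: "p \<ge> 1" and s0: "(\<Sum>k<p. c k) = 0" and lb: "\<And>k. k < p \<Longrightarrow> c k \<ge> -L"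
    and L: "L \<ge> 0"
  shows "(\<Sum>j<n. (real n - real j) * c ((l + j) mod p)) \<le> real n * (real p * L)"
proof (induction n)
  case 0
  then show ?case by simp
next
  case (Suc n)
  have "(\<Sum>j<Suc n. (real (Suc n) - real j) * c ((l + j) mod p))
     = (\<Sum>j<Suc n. (real n - real j) * c ((l + j) mod p) + c ((l + j) mod p))"
    by (intro sum.cong) (auto simp: algebra_simps)
  also have "\<dots> = (\<Sum>j<n. (real n - real j) * c ((l + j) mod p)) + (\<Sum>j<Suc n. c ((l + j) mod p))"
    by (simp add: sum.distrib)
  also have "\<dots> \<le> real n * (real p * L) + real p * L"
    using Suc partial_bound[OF p s0 lb L, where m="Suc n" and l=l] by linarith
  finally show ?case by (simp add: algebra_simps)
qed

lemma gauss_real: "(\<Sum>k<N. real N - real k) = real N * (real N + 1) / 2"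
proof (induction N)
  case 0 then show ?case by simp
next
  case (Suc N)
  have "(\<Sum>k<Suc N. real (Suc N) - real k) = (\<Sum>k<Suc N. (real N - real k) + 1)"
    by (intro sum.cong) auto
  also have "\<dots> = (\<Sum>k<N. real N - real k) + real (Suc N)" by (simp add: sum.distrib)
  finally show ?case using Suc by (simp add: field_simps)
qed

theorem lemma22:
  fixes f :: "'x::euclidean_space \<Rightarrow> 'u::euclidean_space \<Rightarrow> 'x"
    and X :: "'x set" and U :: "'u set"
    and ell :: "'x \<Rightarrow> 'u \<Rightarrow> real"
    and pstar :: nat and Pistar :: "nat \<Rightarrow> 'x \<times> 'u"
    and lam :: "'x \<Rightarrow> real" and lambar :: real and \<alpha> :: "real \<Rightarrow> real"
    and x :: 'x and M :: nat
  assumes A1: "continuous_on (X \<times> U) (\<lambda>z. f (fst z) (snd z))"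
      "continuous_on (X \<times> U) (\<lambda>z. ell (fst z) (snd z))"
      "compact X" "compact U"
    and ell_nonneg: "\<And>x u. x \<in> X \<Longrightarrow> u \<in> U \<Longrightarrow> ell x u \<ge> 0"
    and orbit: "feasible_orbit f X U pstar Pistar"
    and optimal: "avg_cost ell pstar Pistar = ell_star f X U ell"
    and A3: "\<And>x. x \<in> X \<Longrightarrow> \<bar>lam x\<bar> \<le> lambar"
      "class_Kinf \<alpha>"
      "\<And>x u. x \<in> X \<Longrightarrow> u \<in> U \<Longrightarrow> f x u \<in> X \<Longrightarrow>
         ell x u - ell_star f X U ell + lam x - lam (f x u) \<ge> \<alpha> (orbit_dist pstar Pistar x u)"
    and xX: "x \<in> X"
    and reach: "\<exists>ubar \<in> adm f X U M x. \<exists>l<pstar. traj f ubar M x = fst (Pistar l)"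
  shows "\<forall>N::nat. V_beta f X U ell N x - (real N + 1) / 2 * ell_star f X U ell + lam x + lambar
           \<le> real M * (ell_max X U ell - ell_star f X U ell) + 2 * lambar
              + ell_star f X U ell * real pstar"
proof
  fix N :: nat
  obtain ubar l where ub: "ubar \<in> adm f X U M x" and lp: "l < pstar"
    and ubM: "traj f ubar M x = fst (Pistar l)" using reach by blast
  define p where "p = pstar"
  define P where "P = Pistar"
  define ls where "ls = ell_star f X U ell"
  define lmax where "lmax = ell_max X U ell"
  have p1: "p \<ge> 1" and PXU: "\<And>k. k < p \<Longrightarrow> P k \<in> X \<times> U"
    and Pdyn: "\<And>k. k < p \<Longrightarrow> fst (P ((k + 1) mod p)) = f (fst (P k)) (snd (P k))"
    using orbit unfolding feasible_orbit_def p_def P_def by auto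
  have PXU': "fst (P (k mod p)) \<in> X" "snd (P (k mod p)) \<in> U" for k
    using PXU[of "k mod p"] p1 by auto
  define c where "c k = ell (fst (P k)) (snd (P k)) - ls" for k
  have avg: "(1 / real p) * (\<Sum>k<p. ell (fst (P k)) (snd (P k))) = ls"
    using optimal unfolding avg_cost_def p_def P_def ls_def by simp
  hence sumell: "(\<Sum>k<p. ell (fst (P k)) (snd (P k))) = real p * ls"
    using p1 by (simp add: field_simps)
  have s0: "(\<Sum>k<p. c k) = 0" unfolding c_def using sumell by (simp add: sum_subtractf)
  have ellP: "ell (fst (P k)) (snd (P k)) \<ge> 0" if "k < p" for k
    using PXU[OF that] ell_nonneg by auto
  have ls0: "ls \<ge> 0"
  proof -
    have "(\<Sum>k<p. ell (fst (P k)) (snd (P k))) \<ge> 0" by (rule sum_nonneg) (simp add: ellP)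
    thus ?thesis using sumell p1 by (simp add: zero_le_mult_iff)
  qed
  have lb: "c k \<ge> - ls" if "k < p" for k using ellP[OF that] unfolding c_def by simp
  have bdd: "bdd_above ((\<lambda>z. ell (fst z) (snd z)) ` (X \<times> U))"
    by (intro bounded_imp_bdd_above compact_imp_bounded compact_continuous_image A1 compact_Times)
  have lmaxb: "ell a b \<le> lmax" if "a \<in> X" "b \<in> U" for a b
  proof -
    have "ell (fst (a, b)) (snd (a, b)) \<le> lmax"
      unfolding lmax_def ell_max_def by (rule cSUP_upper[OF _ bdd]) (use that in auto)
    thus ?thesis by simp
  qed
  have lsmax: "ls \<le> lmax"
  proof -
    have "(\<Sum>k<p. ell (fst (P k)) (snd (P k))) \<le> (\<Sum>k<p. lmax)"
      by (rule sum_mono) (use PXU lmaxb in force)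
    thus ?thesis using sumell p1 by simp
  qed
  define u where "u k = (if k < M then ubar k else snd (P ((l + (k - M)) mod p)))" for k
  have ubU: "\<And>k. k < M \<Longrightarrow> ubar k \<in> U" and ubX: "\<And>k. k \<le> M \<Longrightarrow> traj f ubar k x \<in> X"
    using ub unfolding adm_def by auto
  have traj1: "k \<le> M \<Longrightarrow> traj f u k x = traj f ubar k x" for k
    by (induction k) (auto simp: u_def)
  have u2: "u (M + j) = snd (P ((l + j) mod p))" for j by (simp add: u_def)
  have traj2: "traj f u (M + j) x = fst (P ((l + j) mod p))" for j
  proof (induction j)
    case 0
    then show ?case using traj1[of M] ubM lp by (simp add: P_def p_def)
  next
    case (Suc j)
    have "traj f u (M + Suc j) x = f (fst (P ((l + j) mod p))) (snd (P ((l + j) mod p)))"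
      using Suc by (simp add: u2)
    also have "\<dots> = fst (P (((l + j) mod p + 1) mod p))"
      using Pdyn[of "(l + j) mod p"] p1 by simp
    also have "((l + j) mod p + 1) mod p = (l + Suc j) mod p" by (simp add: mod_Suc_eq)
    finally show ?case .
  qed
  have uU: "u k \<in> U" for k
  proof (cases "k < M")
    case True thus ?thesis using ubU by (simp add: u_def)
  next
    case False
    then obtain j where "k = M + j" by (metis le_add_diff_inverse not_less)
    thus ?thesis using u2 PXU' by simp
  qed
  have uX: "traj f u k x \<in> X" for k
  proof (cases "k \<le> M")
    case True thus ?thesis using ubX traj1 by simp
  next
    case False
    then obtain j where "k = M + j" by (metis le_add_diff_inverse nat_le_linear)
    thus ?thesis using traj2 PXU' by simp
  qed
  have uadm: "u \<in> adm f X U N x" unfolding adm_def using uU uX by auto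
  have Jnn: "J_beta f ell N x v \<ge> 0" if "v \<in> adm f X U N x" for v
    unfolding J_beta_def
  proof (rule sum_nonneg)
    fix k assume k: "k \<in> {..<N}"
    have "ell (traj f v k x) (v k) \<ge> 0" using that k ell_nonneg unfolding adm_def by auto
    moreover have "(real N - real k) / real N \<ge> 0" using k by simp
    ultimately show "(real N - real k) / real N * ell (traj f v k x) (v k) \<ge> 0" by (metis mult_nonneg_nonneg)
  qed
  have VJ: "V_beta f X U ell N x \<le> J_beta f ell N x u"
    unfolding V_beta_def
    by (rule cINF_lower[OF _ uadm]) (use Jnn in \<open>auto intro!: bdd_belowI2[where m=0]\<close>)
  have main: "J_beta f ell N x u - (real N + 1) / 2 * ls \<le> real M * (lmax - ls) + ls * real p"
  proof (cases "N = 0")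
    case True
    have "0 \<le> real M * (lmax - ls)" using lsmax by simp
    moreover have "0 \<le> ls * real p" using ls0 by simp
    moreover have "J_beta f ell N x u = 0" using True by (simp add: J_beta_def)
    moreover have "(real N + 1) / 2 * ls = ls / 2" using True by simp
    ultimately show ?thesis using ls0 by linarith
  next
    case False
    define g where "g k = (real N - real k) / real N * (ell (traj f u k x) (u k) - ls)" for k
    have "(\<Sum>k<N. (real N - real k) / real N * ls) = (\<Sum>k<N. real N - real k) / real N * ls"
      by (simp add: sum_distrib_right sum_divide_distrib)
    also have "\<dots> = (real N + 1) / 2 * ls" using False by (simp add: gauss_real)
    finally have G: "(\<Sum>k<N. (real N - real k) / real N * ls) = (real N + 1) / 2 * ls" .
    have JG: "J_beta f ell N x u - (real N + 1) / 2 * ls = (\<Sum>k<N. g k)"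
      unfolding J_beta_def g_def G[symmetric] by (simp add: sum_subtractf right_diff_distrib)
    have gle: "g k \<le> lmax - ls" if "k < N" for k
    proof -
      have w: "(real N - real k) / real N \<ge> 0" "(real N - real k) / real N \<le> 1"
        using that by auto
      have "ell (traj f u k x) (u k) - ls \<le> lmax - ls" using lmaxb uX uU by simp
      hence "g k \<le> (real N - real k) / real N * (lmax - ls)"
        unfolding g_def using w(1) by (rule mult_left_mono)
      also have "\<dots> \<le> lmax - ls" using w lsmax by (metis diff_ge_0_iff_ge mult_left_le_one_le)
      finally show ?thesis .
    qed
    show ?thesis
    proof (cases "N \<le> M")
      case True
      have "(\<Sum>k<N. g k) \<le> (\<Sum>k<N. lmax - ls)" by (rule sum_mono) (simp add: gle)
      also have "\<dots> = real N * (lmax - ls)" by simp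
      also have "\<dots> \<le> real M * (lmax - ls)" using True lsmax by (simp add: mult_right_mono)
      finally have "(\<Sum>k<N. g k) \<le> real M * (lmax - ls)" .
      moreover have "0 \<le> ls * real p" using ls0 by simp
      ultimately show ?thesis using JG by linarith
    next
      case NM: False
      then obtain n where Nn: "N = M + n" by (metis le_add_diff_inverse nat_le_linear)
      have "(\<Sum>k<N. g k) = (\<Sum>k<M. g k) + (\<Sum>j<n. g (M + j))" unfolding Nn by (rule split_sum)
      moreover have "(\<Sum>k<M. g k) \<le> real M * (lmax - ls)"
      proof -
        have "(\<Sum>k<M. g k) \<le> (\<Sum>k<M. lmax - ls)" by (rule sum_mono) (use NM gle in auto)
        thus ?thesis by simp
      qed
      moreover have "(\<Sum>j<n. g (M + j)) \<le> ls * real p"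
      proof -
        have "g (M + j) = (real n - real j) * c ((l + j) mod p) / real N" for j
          unfolding g_def c_def using traj2 u2 Nn by simp
        hence "(\<Sum>j<n. g (M + j)) = (\<Sum>j<n. (real n - real j) * c ((l + j) mod p)) / real N"
          by (simp add: sum_divide_distrib)
        also have "\<dots> \<le> real n * (real p * ls) / real N"
          by (rule divide_right_mono, rule weighted_bound[OF p1 s0], simp_all add: lb ls0)
        also have "\<dots> \<le> real p * ls"
        proof -
          have "real n * (real p * ls) \<le> real N * (real p * ls)"
            using Nn ls0 by (intro mult_right_mono) auto
          thus ?thesis using False by (simp add: field_simps)
        qed
        finally show ?thesis by (simp add: mult.commute)
      qed
      ultimately show ?thesis using JG by linarith
    qed
  qed
  have "lam x + lambar \<le> 2 * lambar" using A3(1)[OF xX] by simp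
  thus "V_beta f X U ell N x - (real N + 1) / 2 * ell_star f X U ell + lam x + lambar
           \<le> real M * (ell_max X U ell - ell_star f X U ell) + 2 * lambar
              + ell_star f X U ell * real pstar"
    using VJ main unfolding ls_def lmax_def p_def by linarith
qed

end
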